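(* Let $G$ be a group with a finite generating set $S$ (with $S=S^{-1}$ and $e\notin S$). Suppose $\kappa(a)=0$ for all $a\in S$. Then $G$ is virtually abelian.
   Context: For a group $G$ with finite generating set $S$ ($S=S^{-1}$, $e\notin S$), $|x|$ denotes the word length of $x\in G$ with respect to $S$. For $g\in G$ define $\mathrm{Av}(g)=\frac{1}{|S|}\sum_{a\in S}|a^{-1}ga|$, and for $g\neq e$ define the curvature $\kappa(g)=\frac{|g|-\mathrm{Av}(g)}{|g|}$. *)

theory Defs
  imports "HOL-Algebra.Algebra" "HOL-Algebra.Generated_Groups"
begin

definition word_length :: "('a, 'b) monoid_scheme \<Rightarrow> 'a set \<Rightarrow> 'a \<Rightarrow> nat" where
  "word_length G S x =
     (LEAST n. \<exists>ws. set ws \<subseteq> S \<and> length ws = n \<and> foldr (\<otimes>\<^bsub>G\<^esub>) ws \<one>\<^bsub>G\<^esub> = x)"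

definition Av :: "('a, 'b) monoid_scheme \<Rightarrow> 'a set \<Rightarrow> 'a \<Rightarrow> real" where
  "Av G S g = (\<Sum>a\<in>S. real (word_length G S (inv\<^bsub>G\<^esub> a \<otimes>\<^bsub>G\<^esub> g \<otimes>\<^bsub>G\<^esub> a))) / real (card S)"

definition curvature :: "('a, 'b) monoid_scheme \<Rightarrow> 'a set \<Rightarrow> 'a \<Rightarrow> real" where
  "curvature G S g = (real (word_length G S g) - Av G S g) / real (word_length G S g)"

definition virtually_abelian :: "('a, 'b) monoid_scheme \<Rightarrow> bool" where
  "virtually_abelian G \<longleftrightarrow>
     (\<exists>H. subgroup H G \<and> comm_group (G\<lparr>carrier := H\<rparr>) \<and> finite (rcosets\<^bsub>G\<^esub> H))"

end

theory Submission
  imports Defs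
begin

lemma (in group) wl_ex:
  assumes "set ws \<subseteq> S" "foldr (\<otimes>) ws \<one> = x"
  shows "\<exists>vs. set vs \<subseteq> S \<and> length vs = word_length G S x \<and> foldr (\<otimes>) vs \<one> = x"
  unfolding word_length_def
  by (rule LeastI_ex) (use assms in blast)

lemma (in group) wl_le:
  assumes "set ws \<subseteq> S" "foldr (\<otimes>) ws \<one> = x"
  shows "word_length G S x \<le> length ws"
  unfolding word_length_def
  by (rule Least_le) (use assms in blast)

lemma (in group) wl_pos:
  assumes "set ws \<subseteq> S" "foldr (\<otimes>) ws \<one> = x" "x \<noteq> \<one>"
  shows "word_length G S x \<ge> 1"
proof (rule ccontr)
  assume "\<not> ?thesis"
  then have "word_length G S x = 0" by simp
  with wl_ex[OF assms(1,2)] obtain vs where "length vs = 0" "foldr (\<otimes>) vs \<one> = x" by auto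
  then show False using assms(3) by simp
qed

lemma (in group) wl_one_in:
  assumes "set ws \<subseteq> S" "foldr (\<otimes>) ws \<one> = x" "word_length G S x = 1" "S \<subseteq> carrier G"
  shows "x \<in> S"
proof -
  from wl_ex[OF assms(1,2)] assms(3) obtain vs where v: "set vs \<subseteq> S" "length vs = 1" "foldr (\<otimes>) vs \<one> = x" by auto
  then obtain c where "vs = [c]" by (cases vs) auto
  with v assms(4) show ?thesis by auto
qed

lemma (in group) conj_closed:
  assumes "S \<subseteq> carrier G" "\<one> \<notin> S" "\<forall>a\<in>S. curvature G S a = 0"
    "\<forall>a\<in>S. inv a \<in> S" "finite S" "a \<in> S" "b \<in> S"
  shows "inv b \<otimes> a \<otimes> b \<in> S"
proof -
  have aG: "a \<in> carrier G" using assms(1,6) by blast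
  have wla: "word_length G S a = 1"
  proof -
    have "word_length G S a \<le> 1" using wl_le[of "[a]" S a] assms aG by simp
    moreover have "word_length G S a \<ge> 1" using wl_pos[of "[a]" S a] assms aG by auto
    ultimately show ?thesis by simp
  qed
  define t where "t c = word_length G S (inv c \<otimes> a \<otimes> c)" for c
  have wrd: "set [inv c, a, c] \<subseteq> S \<and> foldr (\<otimes>) [inv c, a, c] \<one> = inv c \<otimes> a \<otimes> c" if "c \<in> S" for c
    using that assms aG by (auto simp: m_assoc)
  have t1: "t c \<ge> 1" if "c \<in> S" for c
  proof -
    have cG: "c \<in> carrier G" using that assms by auto
    have "inv c \<otimes> a \<otimes> c \<noteq> \<one>"
    proof
      assume "inv c \<otimes> a \<otimes> c = \<one>"
      then have "c \<otimes> (inv c \<otimes> a \<otimes> c) \<otimes> inv c = \<one>" using cG by simp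
      then have "c \<otimes> (inv c \<otimes> a) = \<one>" using cG aG by (simp add: m_assoc)
      moreover have "c \<otimes> (inv c \<otimes> a) = a" using cG aG by (simp add: m_assoc[symmetric])
      ultimately have "a = \<one>" by simp
      then show False using assms(2,6) by simp
    qed
    then show ?thesis unfolding t_def using wl_pos[of "[inv c, a, c]" S "inv c \<otimes> a \<otimes> c"] wrd[OF that] by blast
  qed
  have cardpos: "card S > 0" using assms card_gt_0_iff by blast
  have "curvature G S a = 0" using assms(3,6) by simp
  then have "Av G S a = 1" unfolding curvature_def wla by simp
  then have "(\<Sum>c\<in>S. real (t c)) = real (card S)"
    unfolding Av_def t_def using cardpos by (simp add: field_simps)
  then have "(\<Sum>c\<in>S. (real (t c) - 1)) = 0" by (simp add: sum_subtractf)
  moreover have "\<forall>c\<in>S. real (t c) - 1 \<ge> 0" using t1 by fastforce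
  ultimately have "\<forall>c\<in>S. real (t c) - 1 = 0" using sum_nonneg_eq_0_iff[OF assms(5), of "\<lambda>c. real (t c) - 1"] by simp
  then have "t b = 1" using assms(7) by simp
  then show ?thesis using wl_one_in[of "[inv b, a, b]" S "inv b \<otimes> a \<otimes> b"] wrd[OF assms(7)] assms(1) unfolding t_def by blast
qed

lemma (in group) main_aux:
  assumes "finite S"
    and "S \<subseteq> carrier G"
    and "generate G S = carrier G"
    and "\<forall>a\<in>S. inv a \<in> S"
    and "\<one> \<notin> S"
    and "\<forall>a\<in>S. curvature G S a = 0"
  shows "virtually_abelian G"
proof -
  have A: "inv b \<otimes> a \<otimes> b \<in> S" if "a \<in> S" "b \<in> S" for a b
    using conj_closed[OF assms(2,5,6,4,1) that] .
  define K where "K = {g \<in> carrier G. \<forall>a\<in>S. inv g \<otimes> a \<otimes> g \<in> S \<and> g \<otimes> a \<otimes> inv g \<in> S}"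
  have SK: "S \<subseteq> K"
  proof
    fix b assume b: "b \<in> S"
    then have bG: "b \<in> carrier G" using assms by auto
    have "b \<otimes> a \<otimes> inv b \<in> S" if "a \<in> S" for a
      using A[OF that assms(4)[rule_format, OF b]] bG by simp
    then show "b \<in> K" unfolding K_def using A b bG by auto
  qed
  have subK: "subgroup K G"
  proof (rule subgroupI)
    show "K \<subseteq> carrier G" unfolding K_def by auto
    have "\<one> \<in> K" unfolding K_def using assms(2) by auto
    then show "K \<noteq> {}" by blast
    fix g assume g: "g \<in> K"
    then show "inv g \<in> K" unfolding K_def by auto
  next
    fix g h assume g: "g \<in> K" and h: "h \<in> K"
    have gG: "g \<in> carrier G" and hG: "h \<in> carrier G" using g h unfolding K_def by auto
    have "inv (g \<otimes> h) \<otimes> a \<otimes> (g \<otimes> h) \<in> S \<and> (g \<otimes> h) \<otimes> a \<otimes> inv (g \<otimes> h) \<in> S" if a: "a \<in> S" for a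
    proof -
      have aG: "a \<in> carrier G" using a assms by auto
      have e1: "inv (g \<otimes> h) \<otimes> a \<otimes> (g \<otimes> h) = inv h \<otimes> (inv g \<otimes> a \<otimes> g) \<otimes> h"
        using gG hG aG by (simp add: inv_mult_group m_assoc)
      have e2: "(g \<otimes> h) \<otimes> a \<otimes> inv (g \<otimes> h) = g \<otimes> (h \<otimes> a \<otimes> inv h) \<otimes> inv g"
        using gG hG aG by (simp add: inv_mult_group m_assoc)
      have "inv g \<otimes> a \<otimes> g \<in> S" "h \<otimes> a \<otimes> inv h \<in> S" using g h a unfolding K_def by auto
      then show ?thesis unfolding e1 e2 using g h unfolding K_def by auto
    qed
    then show "g \<otimes> h \<in> K" unfolding K_def using gG hG by auto
  qed
  have conjS: "inv g \<otimes> a \<otimes> g \<in> S" if "g \<in> carrier G" "a \<in> S" for g a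
  proof -
    have "carrier G \<subseteq> K" using generate_subgroup_incl[OF SK subK] assms(3) by simp
    then show ?thesis using that unfolding K_def by auto
  qed
  define Z where "Z = {g \<in> carrier G. \<forall>x\<in>carrier G. g \<otimes> x = x \<otimes> g}"
  have subZ: "subgroup Z G"
  proof (rule subgroupI)
    show "Z \<subseteq> carrier G" unfolding Z_def by blast
    have "\<one> \<in> Z" unfolding Z_def by simp
    then show "Z \<noteq> {}" by blast
  next
    fix g assume g: "g \<in> Z"
    then have gG: "g \<in> carrier G" unfolding Z_def by blast
    have "inv g \<otimes> x = x \<otimes> inv g" if x: "x \<in> carrier G" for x
    proof -
      have "g \<otimes> x = x \<otimes> g" using g x unfolding Z_def by blast
      then have "inv g \<otimes> (g \<otimes> x) \<otimes> inv g = inv g \<otimes> (x \<otimes> g) \<otimes> inv g" by simp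
      moreover have "inv g \<otimes> (g \<otimes> x) \<otimes> inv g = x \<otimes> inv g" using gG x by (simp add: m_assoc[symmetric])
      moreover have "inv g \<otimes> (x \<otimes> g) \<otimes> inv g = inv g \<otimes> x" using gG x by (simp add: m_assoc)
      ultimately show ?thesis by simp
    qed
    then show "inv g \<in> Z" unfolding Z_def using gG by blast
  next
    fix g h assume g: "g \<in> Z" and h: "h \<in> Z"
    have gG: "g \<in> carrier G" and hG: "h \<in> carrier G" using g h unfolding Z_def by blast+
    have "g \<otimes> h \<otimes> x = x \<otimes> (g \<otimes> h)" if x: "x \<in> carrier G" for x
    proof -
      have gx: "g \<otimes> x = x \<otimes> g" using g x unfolding Z_def by blast
      have hx: "h \<otimes> x = x \<otimes> h" using h x unfolding Z_def by blast
      have "g \<otimes> h \<otimes> x = g \<otimes> (h \<otimes> x)" using gG hG x by (rule m_assoc)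
      also have "\<dots> = g \<otimes> (x \<otimes> h)" by (simp only: hx)
      also have "\<dots> = g \<otimes> x \<otimes> h" using gG hG x by (simp only: m_assoc)
      also have "\<dots> = x \<otimes> g \<otimes> h" by (simp only: gx)
      also have "\<dots> = x \<otimes> (g \<otimes> h)" using x gG hG by (rule m_assoc)
      finally show ?thesis .
    qed
    then show "g \<otimes> h \<in> Z" unfolding Z_def using gG hG by blast
  qed
  have centS: "g \<in> Z" if g: "g \<in> carrier G" and c: "\<forall>a\<in>S. g \<otimes> a = a \<otimes> g" for g
  proof -
    define C where "C = {x \<in> carrier G. g \<otimes> x = x \<otimes> g}"
    have subC: "subgroup C G"
    proof (rule subgroupI)
      show "C \<subseteq> carrier G" unfolding C_def by blast
      show "C \<noteq> {}" using g unfolding C_def by blast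
    next
      fix x assume x: "x \<in> C"
      then have xG: "x \<in> carrier G" unfolding C_def by blast
      have "g \<otimes> x = x \<otimes> g" using x unfolding C_def by blast
      then have "inv x \<otimes> (g \<otimes> x) \<otimes> inv x = inv x \<otimes> (x \<otimes> g) \<otimes> inv x" by simp
      moreover have "inv x \<otimes> (g \<otimes> x) \<otimes> inv x = inv x \<otimes> g" using g xG by (simp add: m_assoc)
      moreover have "inv x \<otimes> (x \<otimes> g) \<otimes> inv x = g \<otimes> inv x" using g xG by (simp add: m_assoc[symmetric])
      ultimately have "g \<otimes> inv x = inv x \<otimes> g" by simp
      then show "inv x \<in> C" unfolding C_def using xG by blast
    next
      fix x y assume x: "x \<in> C" and y: "y \<in> C"
      have xG: "x \<in> carrier G" and yG: "y \<in> carrier G" using x y unfolding C_def by blast+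
      have gx: "g \<otimes> x = x \<otimes> g" using x unfolding C_def by blast
      have gy: "g \<otimes> y = y \<otimes> g" using y unfolding C_def by blast
      have "g \<otimes> (x \<otimes> y) = g \<otimes> x \<otimes> y" using g xG yG by (simp only: m_assoc)
      also have "\<dots> = x \<otimes> g \<otimes> y" by (simp only: gx)
      also have "\<dots> = x \<otimes> (g \<otimes> y)" using xG g yG by (rule m_assoc)
      also have "\<dots> = x \<otimes> (y \<otimes> g)" by (simp only: gy)
      also have "\<dots> = x \<otimes> y \<otimes> g" using g xG yG by (simp only: m_assoc)
      finally show "x \<otimes> y \<in> C" unfolding C_def using xG yG by blast
    qed
    have "S \<subseteq> C" using c assms(2) unfolding C_def by blast
    then have "generate G S \<subseteq> C" by (rule generate_subgroup_incl[OF _ subC])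
    then have "carrier G \<subseteq> C" using assms(3) by simp
    then show ?thesis using g unfolding C_def Z_def by blast
  qed
  have comm: "comm_group (G\<lparr>carrier := Z\<rparr>)"
  proof -
    interpret gz: group "G\<lparr>carrier := Z\<rparr>" using subgroup_imp_group[OF subZ] .
    show ?thesis
    proof (rule gz.group_comm_groupI)
      fix x y assume "x \<in> carrier (G\<lparr>carrier := Z\<rparr>)" "y \<in> carrier (G\<lparr>carrier := Z\<rparr>)"
      then have x: "x \<in> Z" and yZ: "y \<in> Z" by simp_all
      have y: "y \<in> carrier G" using yZ unfolding Z_def by blast
      from x y have "x \<otimes> y = y \<otimes> x" unfolding Z_def by blast
      then show "x \<otimes>\<^bsub>G\<lparr>carrier := Z\<rparr>\<^esub> y = y \<otimes>\<^bsub>G\<lparr>carrier := Z\<rparr>\<^esub> x" by simp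
    qed
  qed
  define \<phi> where "\<phi> g = restrict (\<lambda>a. inv g \<otimes> a \<otimes> g) S" for g
  define \<psi> where "\<psi> f = Z #> (SOME g. g \<in> carrier G \<and> \<phi> g = f)" for f
  have finphi: "finite (\<phi> ` carrier G)"
  proof (rule finite_subset)
    show "\<phi> ` carrier G \<subseteq> S \<rightarrow>\<^sub>E S" unfolding \<phi>_def using conjS by auto
    show "finite (S \<rightarrow>\<^sub>E S)" using assms(1) by (simp add: finite_PiE)
  qed
  have "rcosets Z \<subseteq> \<psi> ` (\<phi> ` carrier G)"
  proof
    fix Y assume "Y \<in> rcosets Z"
    then obtain g where gG: "g \<in> carrier G" and Y: "Y = Z #> g" unfolding RCOSETS_def by auto
    define g' where "g' = (SOME g'. g' \<in> carrier G \<and> \<phi> g' = \<phi> g)"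
    have "\<exists>g'. g' \<in> carrier G \<and> \<phi> g' = \<phi> g" using gG by blast
    then have g': "g' \<in> carrier G" "\<phi> g' = \<phi> g" unfolding g'_def by (metis (mono_tags, lifting) someI_ex)+
    have "g \<otimes> inv g' \<in> Z"
    proof (rule centS)
      show "g \<otimes> inv g' \<in> carrier G" using gG g' by simp
      show "\<forall>a\<in>S. g \<otimes> inv g' \<otimes> a = a \<otimes> (g \<otimes> inv g')"
      proof
        fix a assume a: "a \<in> S"
        then have aG: "a \<in> carrier G" using assms(2) by blast
        have E: "inv g' \<otimes> a \<otimes> g' = inv g \<otimes> a \<otimes> g"
          using fun_cong[OF g'(2), of a] a unfolding \<phi>_def by simp
        have "g \<otimes> inv g' \<otimes> a = g \<otimes> (inv g' \<otimes> a \<otimes> g') \<otimes> inv g'"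
          using gG g' aG by (simp add: m_assoc)
        also have "\<dots> = g \<otimes> (inv g \<otimes> a \<otimes> g) \<otimes> inv g'" using E by simp
        also have "\<dots> = a \<otimes> (g \<otimes> inv g')"
          using gG g' aG by (simp add: m_assoc[symmetric])
        finally show "g \<otimes> inv g' \<otimes> a = a \<otimes> (g \<otimes> inv g')" .
      qed
    qed
    then have "g \<in> Z #> g'" using subgroup.rcos_module[OF subZ is_group g'(1) gG] by simp
    then have "Z #> g' = Z #> g" using repr_independence[OF _ g'(1) subZ] by blast
    then have "Y = \<psi> (\<phi> g)" unfolding \<psi>_def Y g'_def by simp
    then show "Y \<in> \<psi> ` (\<phi> ` carrier G)" using gG by blast
  qed
  then have "finite (rcosets Z)" using finphi finite_subset by blast
  then show ?thesis unfolding virtually_abelian_def using subZ comm by blast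
qed

theorem mainTheorem1:
  fixes G :: "('a, 'b) monoid_scheme" and S :: "'a set"
  assumes "group G"
    and "finite S"
    and "S \<subseteq> carrier G"
    and "generate G S = carrier G"
    and "\<forall>a\<in>S. inv\<^bsub>G\<^esub> a \<in> S"
    and "\<one>\<^bsub>G\<^esub> \<notin> S"
    and "\<forall>a\<in>S. curvature G S a = 0"
  shows "virtually_abelian G"
  using group.main_aux[OF assms(1) assms(2-7)] .

end
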